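(* Let $\mathcal{P}$ be a finite poset and let $L=\mathfrak{g}(\mathcal{P})$ or $L=\mathfrak{g}_A(\mathcal{P})$. Then $b(L)=|Rel(\mathcal{P})|$.
   Context: All Lie algebras are over an algebraically closed field $\mathbf{k}$ of characteristic zero. A finite poset $(\mathcal{P},\preceq)$ has underlying set $\{1,\dots,n\}$, labeled so that $x\preceq y$ implies $x\le y$ as integers. Write $x\prec y$ if $x\preceq y$ and $x\neq y$; $Rel(\mathcal{P})$ is the set of strict relations of $\mathcal{P}$. The Lie poset algebra $\mathfrak{g}(\mathcal{P})$ is the Lie subalgebra of $\mathfrak{gl}(n,\mathbf{k})$ spanned by the matrix units $E_{i,j}$ with $i\preceq j$, with bracket $[X,Y]=XY-YX$; $\mathfrak{g}_A(\mathcal{P})$ is its subalgebra of trace-zero elements. The breadth of a Lie algebra $L$ is $b(L)=\max_{x\in L}\operatorname{rank}(\mathrm{ad}_x)$, where $\mathrm{ad}_x=[x,-]:L\to L$. *)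

theory Defs
  imports "HOL-Library.Function_Algebras" "HOL-Computational_Algebra.Polynomial"
begin

definition alg_closed :: "'a::field itself \<Rightarrow> bool" where
  "alg_closed _ \<longleftrightarrow> (\<forall>p :: 'a poly. degree p > 0 \<longrightarrow> (\<exists>x. poly p x = 0))"

definition is_labeled_poset :: "nat \<Rightarrow> (nat \<Rightarrow> nat \<Rightarrow> bool) \<Rightarrow> bool" where
  "is_labeled_poset n le \<longleftrightarrow>
     (\<forall>x y. le x y \<longrightarrow> x \<in> {1..n} \<and> y \<in> {1..n} \<and> x \<le> y) \<and>
     (\<forall>x\<in>{1..n}. le x x) \<and>
     (\<forall>x y z. le x y \<longrightarrow> le y z \<longrightarrow> le x z) \<and>
     (\<forall>x y. le x y \<longrightarrow> le y x \<longrightarrow> x = y)"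

definition Rel :: "(nat \<Rightarrow> nat \<Rightarrow> bool) \<Rightarrow> (nat \<times> nat) set" where
  "Rel le = {(x, y). le x y \<and> x \<noteq> y}"

text \<open>n x n matrices are represented as functions nat => nat => 'a (entries indexed by {1..n}).\<close>
definition mat_mult :: "nat \<Rightarrow> (nat \<Rightarrow> nat \<Rightarrow> 'a::field) \<Rightarrow> (nat \<Rightarrow> nat \<Rightarrow> 'a) \<Rightarrow> (nat \<Rightarrow> nat \<Rightarrow> 'a)" where
  "mat_mult n A B = (\<lambda>i j. \<Sum>k\<in>{1..n}. A i k * B k j)"

definition bracket :: "nat \<Rightarrow> (nat \<Rightarrow> nat \<Rightarrow> 'a::field) \<Rightarrow> (nat \<Rightarrow> nat \<Rightarrow> 'a) \<Rightarrow> (nat \<Rightarrow> nat \<Rightarrow> 'a)" where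
  "bracket n A B = (\<lambda>i j. mat_mult n A B i j - mat_mult n B A i j)"

definition mscale :: "'a::field \<Rightarrow> (nat \<Rightarrow> nat \<Rightarrow> 'a) \<Rightarrow> (nat \<Rightarrow> nat \<Rightarrow> 'a)" where
  "mscale c A = (\<lambda>i j. c * A i j)"

definition lie_poset_alg :: "nat \<Rightarrow> (nat \<Rightarrow> nat \<Rightarrow> bool) \<Rightarrow> (nat \<Rightarrow> nat \<Rightarrow> 'a::field) set" where
  "lie_poset_alg n le = {M. \<forall>i j. M i j \<noteq> 0 \<longrightarrow> le i j}"

definition lie_poset_alg_A :: "nat \<Rightarrow> (nat \<Rightarrow> nat \<Rightarrow> bool) \<Rightarrow> (nat \<Rightarrow> nat \<Rightarrow> 'a::field) set" where
  "lie_poset_alg_A n le = {M \<in> lie_poset_alg n le. (\<Sum>i\<in>{1..n}. M i i) = 0}"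

definition ad_rank :: "nat \<Rightarrow> (nat \<Rightarrow> nat \<Rightarrow> 'a::field) set \<Rightarrow> (nat \<Rightarrow> nat \<Rightarrow> 'a) \<Rightarrow> nat" where
  "ad_rank n L x = vector_space.dim mscale ((\<lambda>y. bracket n x y) ` L)"

definition breadth :: "nat \<Rightarrow> (nat \<Rightarrow> nat \<Rightarrow> 'a::field) set \<Rightarrow> nat" where
  "breadth n L = Max (ad_rank n L ` L)"

end

theory Submission imports Defs begin

interpretation MV: vector_space "mscale :: 'a::field \<Rightarrow> (nat\<Rightarrow>nat\<Rightarrow>'a) \<Rightarrow> _"
  by unfold_locales (auto simp: mscale_def fun_eq_iff algebra_simps)

definition EE :: "nat \<times> nat \<Rightarrow> (nat \<Rightarrow> nat \<Rightarrow> 'a::field)" where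
  "EE p = (\<lambda>a b. if (a,b) = p then 1 else 0)"

lemma poset_bnd: "is_labeled_poset n le \<Longrightarrow> le x y \<Longrightarrow> x \<in> {1..n} \<and> y \<in> {1..n} \<and> x \<le> y"
  unfolding is_labeled_poset_def by blast

lemma poset_antisym: "is_labeled_poset n le \<Longrightarrow> le x y \<Longrightarrow> le y x \<Longrightarrow> x = y"
  unfolding is_labeled_poset_def by blast

lemma poset_trans: "is_labeled_poset n le \<Longrightarrow> le x y \<Longrightarrow> le y z \<Longrightarrow> le x z"
  unfolding is_labeled_poset_def by blast

lemma poset_refl: "is_labeled_poset n le \<Longrightarrow> x \<in> {1..n} \<Longrightarrow> le x x"
  unfolding is_labeled_poset_def by blast

lemma finite_Rel: assumes "is_labeled_poset n le" shows "finite (Rel le)"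
proof (rule finite_subset[of _ "{1..n}\<times>{1..n}"])
  show "Rel le \<subseteq> {1..n}\<times>{1..n}"
    using poset_bnd[OF assms] unfolding Rel_def by blast
qed simp

lemma sum_fun_apply2: "(\<Sum>p\<in>A. f p) a b = (\<Sum>p\<in>A. f p a b)"
  by (induction A rule: infinite_finite_induct) auto

lemma inj_EE: "inj (EE :: _ \<Rightarrow> (nat \<Rightarrow> nat \<Rightarrow> 'a::field))"
proof (rule injI)
  fix p q :: "nat \<times> nat" assume "(EE p :: nat \<Rightarrow> nat \<Rightarrow> 'a) = EE q"
  then have "(EE p :: nat \<Rightarrow> nat \<Rightarrow> 'a) (fst p) (snd p) = EE q (fst p) (snd p)" by simp
  then show "p = q" by (auto simp: EE_def split: if_splits)
qed

lemma W_span: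
  assumes fin: "finite R" and M: "\<forall>a b. M a b \<noteq> 0 \<longrightarrow> (a,b) \<in> R"
  shows "(M :: nat\<Rightarrow>nat\<Rightarrow>'a::field) \<in> MV.span (EE ` R)"
proof -
  have "M = (\<Sum>p\<in>R. mscale (M (fst p) (snd p)) (EE p))"
  proof (rule ext, rule ext)
    fix a b
    have "(\<Sum>p\<in>R. mscale (M (fst p) (snd p)) (EE p)) a b = (\<Sum>p\<in>R. if p = (a,b) then M a b else 0)"
      unfolding sum_fun_apply2 by (rule sum.cong) (auto simp: mscale_def EE_def)
    also have "\<dots> = M a b" using M fin by (auto simp: sum.delta')
    finally show "M a b = (\<Sum>p\<in>R. mscale (M (fst p) (snd p)) (EE p)) a b" by simp
  qed
  also have "\<dots> \<in> MV.span (EE ` R)"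
    by (intro MV.span_sum MV.span_scale MV.span_base) auto
  finally show ?thesis .
qed

lemma indep_EE:
  assumes fin: "finite R"
  shows "MV.independent (EE ` R :: (nat\<Rightarrow>nat\<Rightarrow>'a::field) set)"
proof
  assume "MV.dependent (EE ` R :: (nat\<Rightarrow>nat\<Rightarrow>'a::field) set)"
  then obtain u where u: "\<exists>v\<in>EE ` R. u v \<noteq> 0" "(\<Sum>v\<in>EE ` R. mscale (u v) v) = (0 :: nat\<Rightarrow>nat\<Rightarrow>'a)"
    using MV.dependent_finite[of "EE ` R"] fin by auto
  then obtain q where q: "q \<in> R" "u (EE q) \<noteq> 0" by auto
  have "(\<Sum>p\<in>R. mscale (u (EE p)) (EE p)) = (0 :: nat\<Rightarrow>nat\<Rightarrow>'a)"
    using u(2) by (subst (asm) sum.reindex) (auto intro: inj_on_subset[OF inj_EE])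
  have "u (EE q) = (\<Sum>p\<in>R. if p = q then u (EE q) else (0::'a))"
    using q(1) fin by (simp add: sum.delta)
  also have "\<dots> = (\<Sum>p\<in>R. mscale (u (EE p)) (EE p)) (fst q) (snd q)"
    unfolding sum_fun_apply2 by (rule sum.cong) (auto simp: mscale_def EE_def)
  also have "\<dots> = 0" using \<open>(\<Sum>p\<in>R. mscale (u (EE p)) (EE p)) = 0\<close> by simp
  finally have "u (EE q) = 0" .
  with q(2) show False by contradiction
qed


definition diag :: "nat \<Rightarrow> (nat \<Rightarrow> 'a::field) \<Rightarrow> nat \<Rightarrow> nat \<Rightarrow> 'a" where
  "diag n d = (\<lambda>a b. if a = b \<and> a \<in> {1..n} then d a else 0)"

lemma mm_diag_E:
  assumes "i \<in> {1..n}"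
  shows "mat_mult n (diag n d) (EE (i,j)) a b = (if a = i \<and> b = j then d i else 0)"
proof -
  have "mat_mult n (diag n d) (EE (i,j)) a b = (\<Sum>k\<in>{1..n}. if k = i then (if a = i \<and> b = j then d i else 0) else 0)"
    unfolding mat_mult_def by (rule sum.cong) (auto simp: diag_def EE_def)
  also have "\<dots> = (if a = i \<and> b = j then d i else 0)" using assms by (simp add: sum.delta)
  finally show ?thesis .
qed

lemma mm_E_diag:
  assumes "j \<in> {1..n}"
  shows "mat_mult n (EE (i,j)) (diag n d) a b = (if a = i \<and> b = j then d j else 0)"
proof -
  have "mat_mult n (EE (i,j)) (diag n d) a b = (\<Sum>k\<in>{1..n}. if k = j then (if a = i \<and> b = j then d j else 0) else 0)"
    unfolding mat_mult_def by (rule sum.cong) (auto simp: diag_def EE_def)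
  also have "\<dots> = (if a = i \<and> b = j then d j else 0)" using assms by (simp add: sum.delta)
  finally show ?thesis .
qed

lemma br_diag_E:
  assumes "i \<in> {1..n}" "j \<in> {1..n}"
  shows "bracket n (diag n d) (EE (i,j)) = mscale (d i - d j) (EE (i,j))"
  unfolding bracket_def mscale_def fun_eq_iff mm_diag_E[OF assms(1)] mm_E_diag[OF assms(2)]
  by (auto simp: EE_def)

lemma br_W:
  assumes P: "is_labeled_poset n le" and x: "x \<in> lie_poset_alg n le" and y: "y \<in> lie_poset_alg n le"
    and nz: "bracket n x y a b \<noteq> 0"
  shows "(a,b) \<in> Rel le"
proof (rule ccontr)
  assume nR: "(a,b) \<notin> Rel le"
  have xs: "x u v \<noteq> 0 \<Longrightarrow> le u v" for u v using x by (auto simp: lie_poset_alg_def)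
  have ys: "y u v \<noteq> 0 \<Longrightarrow> le u v" for u v using y by (auto simp: lie_poset_alg_def)
  have term0: "x a k * y k b - y a k * x k b = 0" for k
  proof (cases "a = b")
    case True
    show ?thesis
    proof (cases "k = a")
      case True with \<open>a = b\<close> show ?thesis by (simp add: mult.commute)
    next
      case False
      have "x a k * y k b = 0"
      proof (rule ccontr)
        assume "x a k * y k b \<noteq> 0"
        then have "le a k" "le k a" using xs ys \<open>a = b\<close> by auto
        then show False using poset_antisym[OF P] False by blast
      qed
      moreover have "y a k * x k b = 0"
      proof (rule ccontr)
        assume "y a k * x k b \<noteq> 0"
        then have "le a k" "le k a" using xs ys \<open>a = b\<close> by auto
        then show False using poset_antisym[OF P] False by blast
      qed
      ultimately show ?thesis by auto
    qed
  next
    case False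
    with nR have nle: "\<not> le a b" by (auto simp: Rel_def)
    have "x a k * y k b = 0"
    proof (rule ccontr)
      assume "x a k * y k b \<noteq> 0"
      then have "le a k" "le k b" using xs ys by auto
      then show False using poset_trans[OF P] nle by blast
    qed
    moreover have "y a k * x k b = 0"
    proof (rule ccontr)
      assume "y a k * x k b \<noteq> 0"
      then have "le a k" "le k b" using xs ys by auto
      then show False using poset_trans[OF P] nle by blast
    qed
    ultimately show ?thesis by auto
  qed
  have "bracket n x y a b = (\<Sum>k\<in>{1..n}. x a k * y k b - y a k * x k b)"
    by (simp add: bracket_def mat_mult_def sum_subtractf)
  also have "\<dots> = 0" using term0 by simp
  finally show False using nz by simp
qed

lemma dim_ge:
  assumes "B \<subseteq> MV.span V" "MV.independent B" "V \<subseteq> MV.span C" "finite C"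
  shows "card (B :: (nat \<Rightarrow> nat \<Rightarrow> 'a::field) set) \<le> MV.dim V"
proof -
  obtain B' where B': "B' \<subseteq> V" "MV.independent B'" "V \<subseteq> MV.span B'" "card B' = MV.dim V"
    using MV.basis_exists[of V] by blast
  have "B' \<subseteq> MV.span C" using B'(1) assms(3) by blast
  then have finB': "finite B'" using MV.independent_span_bound[OF assms(4) B'(2)] by blast
  have "MV.span V \<subseteq> MV.span B'" using MV.span_minimal[OF B'(3) MV.subspace_span] .
  then have "B \<subseteq> MV.span B'" using assms(1) by blast
  then have "card B \<le> card B'" using MV.independent_span_bound[OF finB' assms(2)] by blast
  then show ?thesis using B'(4) by simp
qed

lemma main:
  assumes P: "is_labeled_poset n le"
    and Lsub: "L \<subseteq> lie_poset_alg n le"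
    and x0: "diag n d \<in> L"
    and dist: "\<And>i j. i \<in> {1..n} \<Longrightarrow> j \<in> {1..n} \<Longrightarrow> i \<noteq> j \<Longrightarrow> d i \<noteq> (d j :: 'a::field)"
    and EL: "\<And>p. p \<in> Rel le \<Longrightarrow> EE p \<in> L"
  shows "breadth n L = card (Rel le)"
proof -
  have finR: "finite (Rel le)" using finite_Rel[OF P] .
  have cardE: "card (EE ` Rel le :: (nat \<Rightarrow> nat \<Rightarrow> 'a) set) = card (Rel le)"
    by (rule card_image) (rule inj_on_subset[OF inj_EE], simp)
  have upsp: "(\<lambda>y. bracket n x y) ` L \<subseteq> MV.span (EE ` Rel le)" if "x \<in> L" for x
  proof
    fix M :: "nat \<Rightarrow> nat \<Rightarrow> 'a" assume "M \<in> (\<lambda>y. bracket n x y) ` L"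
    then obtain y where "y \<in> L" "M = bracket n x y" by blast
    then have "\<forall>a b. M a b \<noteq> 0 \<longrightarrow> (a,b) \<in> Rel le"
      using br_W[OF P] Lsub \<open>x \<in> L\<close> by blast
    then show "M \<in> MV.span (EE ` Rel le)" using W_span[OF finR] by blast
  qed
  have up: "ad_rank n L x \<le> card (Rel le)" if "x \<in> L" for x
    unfolding ad_rank_def
    using MV.dim_le_card[OF upsp[OF that]] finR cardE by simp
  have lo: "card (Rel le) \<le> ad_rank n L (diag n d)"
  proof -
    have "EE ` Rel le \<subseteq> MV.span ((\<lambda>y. bracket n (diag n d) y) ` L)"
    proof
      fix M :: "nat \<Rightarrow> nat \<Rightarrow> 'a" assume "M \<in> EE ` Rel le"
      then obtain i j where ij: "(i,j) \<in> Rel le" "M = EE (i,j)" by auto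
      then have "le i j" "i \<noteq> j" by (auto simp: Rel_def)
      then have ijn: "i \<in> {1..n}" "j \<in> {1..n}" using poset_bnd[OF P] by blast+
      have nz: "d i - d j \<noteq> 0" using dist[OF ijn \<open>i \<noteq> j\<close>] by simp
      have "bracket n (diag n d) (EE (i,j)) \<in> (\<lambda>y. bracket n (diag n d) y) ` L"
        using EL[OF ij(1)] by blast
      then have "mscale (inverse (d i - d j)) (bracket n (diag n d) (EE (i,j))) \<in> MV.span ((\<lambda>y. bracket n (diag n d) y) ` L)"
        by (intro MV.span_scale MV.span_base)
      moreover have "mscale (inverse (d i - d j)) (bracket n (diag n d) (EE (i,j))) = M"
        using nz ij(2) by (simp add: br_diag_E[OF ijn] mscale_def fun_eq_iff)
      ultimately show "M \<in> MV.span ((\<lambda>y. bracket n (diag n d) y) ` L)" by simp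
    qed
    from dim_ge[OF this indep_EE[OF finR] upsp[OF x0] finite_imageI[OF finR]]
    show ?thesis using cardE by (simp add: ad_rank_def)
  qed
  have fin: "finite (ad_rank n L ` L)"
    by (rule finite_subset[of _ "{..card (Rel le)}"]) (use up in auto)
  show ?thesis unfolding breadth_def
    by (rule Max_eqI[OF fin]) (use up lo x0 in \<open>auto intro: antisym\<close>)
qed


theorem theorem1:
  fixes n :: nat and le :: "nat \<Rightarrow> nat \<Rightarrow> bool"
  assumes "alg_closed TYPE('a::field_char_0)"
    and "is_labeled_poset n le"
  shows "breadth n (lie_poset_alg n le :: (nat \<Rightarrow> nat \<Rightarrow> 'a) set) = card (Rel le) \<and>
         breadth n (lie_poset_alg_A n le :: (nat \<Rightarrow> nat \<Rightarrow> 'a) set) = card (Rel le)"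
proof -
  note P = assms(2)
  define S where "S = (\<Sum>k\<in>{1..n}. k)"
  define d :: "nat \<Rightarrow> 'a" where "d = (\<lambda>i. of_nat (n * i) - of_nat S)"
  have dist: "d i \<noteq> d j" if "i \<in> {1..n}" "j \<in> {1..n}" "i \<noteq> j" for i j
  proof
    assume "d i = d j"
    then have "(of_nat (n * i) :: 'a) = of_nat (n * j)" by (simp add: d_def)
    then have "n * i = n * j" by (simp only: of_nat_eq_iff)
    moreover have "n > 0" using that by auto
    ultimately show False using that(3) by simp
  qed
  have sub: "lie_poset_alg_A n le \<subseteq> (lie_poset_alg n le :: (nat \<Rightarrow> nat \<Rightarrow> 'a) set)"
    by (auto simp: lie_poset_alg_A_def)
  have tr: "(\<Sum>i\<in>{1..n}. d i) = 0"
  proof -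
    have "(\<Sum>i\<in>{1..n}. d i) = (\<Sum>i\<in>{1..n}. of_nat n * of_nat i) - (\<Sum>i\<in>{1..n}. (of_nat S :: 'a))"
      by (simp add: d_def sum_subtractf)
    also have "\<dots> = of_nat n * of_nat S - of_nat n * of_nat S"
      by (simp add: sum_distrib_left[symmetric] S_def)
    finally show ?thesis by simp
  qed
  have x0: "diag n d \<in> lie_poset_alg_A n le"
    unfolding lie_poset_alg_A_def lie_poset_alg_def
    using tr poset_refl[OF P] by (auto simp: diag_def)
  have EL: "EE p \<in> (lie_poset_alg_A n le :: (nat \<Rightarrow> nat \<Rightarrow> 'a) set)" if "p \<in> Rel le" for p
  proof -
    obtain i j where p0: "p = (i,j)" by (cases p)
    have p: "p = (i,j)" "le i j" "i \<noteq> j" using that p0 by (auto simp: Rel_def)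
    have "(\<Sum>k\<in>{1..n}. (EE p :: nat \<Rightarrow> nat \<Rightarrow> 'a) k k) = 0"
      using p by (intro sum.neutral) (auto simp: EE_def)
    then show ?thesis using p unfolding lie_poset_alg_A_def lie_poset_alg_def
      by (auto simp: EE_def)
  qed
  have "breadth n (lie_poset_alg n le :: (nat \<Rightarrow> nat \<Rightarrow> 'a) set) = card (Rel le)"
    by (rule main[OF P order.refl _ dist]) (use x0 sub EL in auto)
  moreover have "breadth n (lie_poset_alg_A n le :: (nat \<Rightarrow> nat \<Rightarrow> 'a) set) = card (Rel le)"
    by (rule main[OF P sub x0 dist]) (use EL in auto)
  ultimately show ?thesis by simp
qed

end
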